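(* Let $(S,W)$ be the spherical Coxeter complex of type $A_n$. Let $\alpha\subset S$ be a root and $v\in\alpha\setminus\partial\alpha$ a vertex in its interior. Then $\lambda_v:=\sin d(v,\partial\alpha)>0$ depends only on the type of the vertex $v$ (and not on $\alpha$). In particular, if $K\subsetneq S$ is a top-dimensional convex subcomplex containing $v$ in its interior, then $f_K(v)=-\lambda_v$, which is independent of $K$.
   Context: $(S,W)$ is the unit sphere $S$ in the hyperplane $\{\sum x_i=0\}\subset\mathbb{R}^{n+1}$ together with the Weyl group $W$ of the root system $A_n$ (permutations of coordinates), acting by reflections. Walls are fixed spheres of reflections in $W$; roots are closed hemispheres bounded by walls, $\partial\alpha$ the boundary wall; Weyl chambers are closures of components of the complement of the walls; faces are intersections of chambers with intersections of walls; vertices are 0-dimensional faces. The type of a vertex is its image under the projection $S\to S/W$ (the model Weyl chamber, whose vertices are labelled). A convex subcomplex $K$ is an intersection of roots; it is top-dimensional if $\dim K=\dim S$. For a proper top-dimensional convex subcomplex $K$, $f_K(x)=\max_{\alpha\in\Lambda_K}\{-\sin d(x,\partial\alpha)\}$ for $x\in K$, where $\Lambda_K$ is the set of roots containing $K$. *)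

theory Defs
  imports "HOL-Analysis.Analysis"
begin

text \<open>Spherical Coxeter complex of type A_n.  The ambient space R^(n+1) is
  real^'n with CARD('n) = n+1.\<close>

definition Sph :: "(real^'n) set" where
  "Sph = {x. (\<Sum>i\<in>UNIV. x $ i) = 0 \<and> norm x = 1}"

definition perm_act :: "('n \<Rightarrow> 'n) \<Rightarrow> real^'n \<Rightarrow> real^'n" where
  "perm_act \<sigma> x = (\<chi> i. x $ \<sigma> i)"

definition Weyl :: "(real^'n \<Rightarrow> real^'n) set" where
  "Weyl = {perm_act \<sigma> | \<sigma>. bij \<sigma>}"

definition is_reflection :: "(real^'n \<Rightarrow> real^'n) \<Rightarrow> bool" where
  "is_reflection w \<longleftrightarrow> w \<in> Weyl \<and>
     (\<exists>u. u \<noteq> 0 \<and> (\<forall>x. w x = x - (2 * (x \<bullet> u) / (u \<bullet> u)) *\<^sub>R u))"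

definition is_wall :: "(real^'n) set \<Rightarrow> bool" where
  "is_wall H \<longleftrightarrow> (\<exists>w. is_reflection w \<and> H = {x \<in> Sph. w x = x})"

definition is_root :: "(real^'n) set \<Rightarrow> bool" where
  "is_root \<alpha> \<longleftrightarrow> (\<exists>u. u \<noteq> 0 \<and> is_wall {x \<in> Sph. x \<bullet> u = 0} \<and>
                        \<alpha> = {x \<in> Sph. 0 \<le> x \<bullet> u})"

definition root_bdry :: "(real^'n) set \<Rightarrow> (real^'n) set" where
  "root_bdry \<alpha> = (THE H. is_wall H \<and>
      (\<exists>u. u \<noteq> 0 \<and> H = {x \<in> Sph. x \<bullet> u = 0} \<and> \<alpha> = {x \<in> Sph. 0 \<le> x \<bullet> u}))"

definition is_chamber :: "(real^'n) set \<Rightarrow> bool" where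
  "is_chamber C \<longleftrightarrow> (\<exists>x \<in> Sph - \<Union>{H. is_wall H}.
      C = closure (connected_component_set (Sph - \<Union>{H. is_wall H}) x))"

definition is_face :: "(real^'n) set \<Rightarrow> bool" where
  "is_face F \<longleftrightarrow> (\<exists>C \<H>. is_chamber C \<and> (\<forall>H\<in>\<H>. is_wall H) \<and> F = C \<inter> \<Inter>\<H>)"

definition is_vertex :: "real^'n \<Rightarrow> bool" where
  "is_vertex v \<longleftrightarrow> is_face {v}"

text \<open>Type of a vertex: its image in S/W, i.e. its W-orbit.\<close>
definition vtype :: "real^'n \<Rightarrow> (real^'n) set" where
  "vtype v = (\<lambda>w. w v) ` Weyl"

definition sdist :: "real^'n \<Rightarrow> real^'n \<Rightarrow> real" where
  "sdist x y = arccos (x \<bullet> y)"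

definition sdist_set :: "real^'n \<Rightarrow> (real^'n) set \<Rightarrow> real" where
  "sdist_set x A = Inf (sdist x ` A)"

definition convex_subcomplex :: "(real^'n) set \<Rightarrow> bool" where
  "convex_subcomplex K \<longleftrightarrow> (\<exists>\<A>. (\<forall>\<alpha>\<in>\<A>. is_root \<alpha>) \<and> K = Sph \<inter> \<Inter>\<A>)"

text \<open>Top-dimensional: dim K = dim S (linear dimension of the spans; the
  spherical dimensions are these minus one).\<close>
definition top_dimensional :: "(real^'n) set \<Rightarrow> bool" where
  "top_dimensional K \<longleftrightarrow> dim K = dim (Sph :: (real^'n) set)"

definition s_interior :: "(real^'n) set \<Rightarrow> (real^'n) set" where
  "s_interior K = {x \<in> K. \<exists>e>0. Sph \<inter> ball x e \<subseteq> K}"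

definition Lambda :: "(real^'n) set \<Rightarrow> (real^'n) set set" where
  "Lambda K = {\<alpha>. is_root \<alpha> \<and> K \<subseteq> \<alpha>}"

definition fK :: "(real^'n) set \<Rightarrow> real^'n \<Rightarrow> real" where
  "fK K x = Max ((\<lambda>\<alpha>. - sin (sdist_set x (root_bdry \<alpha>))) ` Lambda K)"

end

theory Submission
  imports Defs
begin

lemma Sph_iff: "x \<in> Sph \<longleftrightarrow> (\<Sum>i\<in>UNIV. x $ i) = 0 \<and> norm x = 1"
  by (simp add: Sph_def)

lemma closed_Sph: "closed (Sph :: (real^'n) set)"
proof -
  have "Sph = {x::real^'n. (\<Sum>i\<in>UNIV. x $ i) = 0} \<inter> {x. norm x = 1}" by (auto simp: Sph_def)
  moreover have "closed {x::real^'n. (\<Sum>i\<in>UNIV. x $ i) = 0}"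
    by (intro closed_Collect_eq continuous_intros)
  moreover have "closed {x::real^'n. norm x = 1}"
    by (intro closed_Collect_eq continuous_intros)
  ultimately show ?thesis by (metis closed_Int)
qed

lemma Sph_nonconst:
  assumes "x \<in> (Sph :: (real^'n) set)" shows "\<exists>i j. x $ i \<noteq> x $ j"
proof (rule ccontr)
  assume "\<not> ?thesis"
  then obtain a where a: "\<And>i. x $ i = a" by auto
  have "(\<Sum>i\<in>(UNIV::'n set). x $ i) = real CARD('n) * a" by (simp add: a)
  with assms have "a = 0" by (simp add: Sph_def)
  hence "x = 0" using a by (simp add: vec_eq_iff)
  with assms show False by (simp add: Sph_def)
qed

lemma neg_Sph: "x \<in> Sph \<Longrightarrow> - x \<in> Sph"
  by (simp add: Sph_def sum_negf)

definition hf :: "real \<Rightarrow> real \<Rightarrow> real \<Rightarrow> real" where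
  "hf t c s = s + t * max 0 (s - c)"

lemma hf_less: "0 \<le> t \<Longrightarrow> s < s' \<Longrightarrow> hf t c s < hf t c s'"
proof -
  assume "0 \<le> t" "s < s'"
  have "max 0 (s - c) \<le> max 0 (s' - c)" using \<open>s < s'\<close> by auto
  hence "t * max 0 (s - c) \<le> t * max 0 (s' - c)" using \<open>0 \<le> t\<close> by (rule mult_left_mono)
  thus ?thesis using \<open>s < s'\<close> by (simp add: hf_def)
qed

lemma hf_eq_iff: "0 \<le> t \<Longrightarrow> hf t c s = hf t c s' \<longleftrightarrow> s = s'"
  by (metis hf_less linorder_neq_iff order_less_irrefl)

definition cen :: "real^'n \<Rightarrow> real^'n" where
  "cen (z::real^'n) = (\<chi> i. z $ i - (\<Sum>j\<in>UNIV. z $ j) / real CARD('n))"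

lemma cen_sum: "(\<Sum>i\<in>UNIV. cen z $ i) = 0"
  by (simp add: cen_def sum_subtractf)

definition PP :: "real \<Rightarrow> real \<Rightarrow> real^'n \<Rightarrow> real^'n" where
  "PP t c y = (1 / norm (cen (\<chi> i. hf t c (y $ i)))) *\<^sub>R cen (\<chi> i. hf t c (y $ i))"

lemma cen_nz:
  assumes "0 \<le> t" "y \<in> Sph" shows "cen (\<chi> i. hf t c (y $ i)) \<noteq> 0"
proof
  assume z: "cen (\<chi> i. hf t c (y $ i)) = 0"
  obtain i j where "y $ i \<noteq> y $ j" using Sph_nonconst[OF assms(2)] by auto
  moreover have "cen (\<chi> i. hf t c (y $ i)) $ i = cen (\<chi> i. hf t c (y $ i)) $ j" using z by simp
  ultimately show False using hf_eq_iff[OF assms(1)] by (simp add: cen_def)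
qed

lemma PP_comp: "PP t c (y::real^'n) $ i = (hf t c (y $ i) - (\<Sum>j\<in>UNIV. hf t c (y $ j)) / real CARD('n))
     / norm (cen (\<chi> i. hf t c (y $ i)))"
  by (simp add: PP_def cen_def)

lemma PP_Sph: assumes "0 \<le> t" "y \<in> Sph" shows "PP t c y \<in> Sph"
proof -
  let ?z = "cen (\<chi> i. hf t c (y $ i))"
  have "norm ?z \<noteq> 0" using cen_nz[OF assms] by simp
  moreover have "(\<Sum>i\<in>UNIV. PP t c y $ i) = (1 / norm ?z) * (\<Sum>i\<in>UNIV. ?z $ i)"
    by (simp add: PP_def sum_distrib_left)
  ultimately show ?thesis by (simp add: Sph_def cen_sum PP_def)
qed

lemma PP_eq_iff: assumes "0 \<le> t" "y \<in> Sph" shows "PP t c y $ i = PP t c y $ j \<longleftrightarrow> y $ i = y $ j"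
proof -
  let ?z = "cen (\<chi> i. hf t c (y $ i))"
  have "norm ?z \<noteq> 0" using cen_nz[OF assms] by simp
  hence "PP t c y $ i = PP t c y $ j \<longleftrightarrow> hf t c (y $ i) = hf t c (y $ j)"
    unfolding PP_comp by (auto simp: divide_cancel_right)
  thus ?thesis using hf_eq_iff[OF assms(1)] by simp
qed

lemma PP_0: assumes "y \<in> Sph" shows "PP 0 c y = y"
  using assms by (simp add: PP_def hf_def cen_def Sph_def)

lemma perm_act_PP: assumes "0 \<le> t" "y \<in> Sph"
  shows "perm_act \<sigma> (PP t c y) = PP t c y \<longleftrightarrow> perm_act \<sigma> y = y"
  using PP_eq_iff[OF assms] by (simp add: perm_act_def vec_eq_iff)

lemma PP_cont_t: assumes "y \<in> Sph" shows "continuous_on {0..1} (\<lambda>t. PP t c y)"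
proof -
  have "\<forall>t\<in>{0..1}. norm (cen (\<chi> i. hf t c (y $ i))) \<noteq> 0" using cen_nz[OF _ assms] by auto
  thus ?thesis unfolding PP_def cen_def hf_def
    by (intro continuous_intros) auto
qed

lemma PP_cont_y: assumes "0 \<le> t" shows "continuous_on Sph (\<lambda>y. PP t c y)"
proof -
  have "\<forall>y\<in>Sph. norm (cen (\<chi> i. hf t c (y $ i))) \<noteq> 0" using cen_nz[OF assms] by auto
  thus ?thesis unfolding PP_def cen_def hf_def
    by (intro continuous_intros) auto
qed

lemma wall_perm: assumes "is_wall H"
  shows "\<exists>\<sigma>. H = {x\<in>Sph. perm_act \<sigma> x = x}"
  using assms unfolding is_wall_def is_reflection_def Weyl_def by blast

lemma perm_axis: "perm_act \<sigma> (axis k (1::real)) $ i = (if \<sigma> i = k then 1 else 0)"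
  by (simp add: perm_act_def axis_def)

lemma wall_kl: assumes "is_wall (H :: (real^'n) set)"
  shows "\<exists>k l. k \<noteq> l \<and> H = {x\<in>Sph. x $ k = x $ l}"
proof -
  obtain w \<sigma> u where H: "H = {x\<in>Sph. w x = x}" and w: "w = perm_act \<sigma>" and b: "bij \<sigma>"
    and u: "u \<noteq> 0" and r: "\<And>x. w x = x - (2 * (x \<bullet> u) / (u \<bullet> u)) *\<^sub>R u"
    using assms unfolding is_wall_def is_reflection_def Weyl_def by blast
  obtain k where uk: "u $ k \<noteq> 0" using u by (auto simp: vec_eq_iff)
  define c where "c = 2 / (u \<bullet> u)"
  have uu: "u \<bullet> u > 0" using u by simp
  hence c: "c > 0" by (simp add: c_def)
  define l where "l = inv \<sigma> k"
  have sl: "\<sigma> l = k" unfolding l_def using b by (simp add: bij_def surj_f_inv_f)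
  have comp: "(if \<sigma> i = k then 1 else 0) = (if i = k then 1 else 0) - c * u $ k * u $ i" for i
  proof -
    have "perm_act \<sigma> (axis k (1::real)) $ i = (axis k 1 - (2 * (axis k 1 \<bullet> u) / (u \<bullet> u)) *\<^sub>R u) $ i"
      using r[of "axis k 1"] w by simp
    hence "(if \<sigma> i = k then 1 else 0) = (axis k 1 - (2 * (u $ k) / (u \<bullet> u)) *\<^sub>R u) $ i"
      by (simp only: perm_axis inner_axis' inner_real_def mult_1)
    thus ?thesis by (simp add: c_def axis_def)
  qed
  have lk: "l \<noteq> k"
  proof
    assume "l = k"
    hence "c * u $ k * u $ k = 0" using comp[of k] sl by simp
    thus False using c uk by simp
  qed
  have si: "\<sigma> i = k \<longleftrightarrow> i = l" for i using sl b by (metis bij_def inj_eq)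
  have ui: "u $ i = (if i = k then 1 else 0) / (c * u $ k) - (if i = l then 1 else 0) / (c * u $ k)" for i
  proof -
    have cu: "c * u $ k \<noteq> 0" using c uk by simp
    have e: "(if i = l then 1 else 0) = (if i = k then 1 else 0) - c * u $ k * u $ i"
      using comp[of i] si[of i] by simp
    show ?thesis
    proof (cases "i = k")
      case True
      hence "c * u $ k * u $ i = 1" using e lk by simp
      thus ?thesis using True lk cu by (simp add: field_simps)
    next
      case False
      hence "c * u $ k * u $ i = - (if i = l then 1 else 0)" using e by simp
      thus ?thesis using False cu by (simp add: field_simps)
    qed
  qed
  have ueq: "u = (1 / (c * u $ k)) *\<^sub>R (axis k 1 - axis l 1)"
  proof (subst vec_eq_iff, intro allI)
    fix i show "u $ i = ((1 / (c * u $ k)) *\<^sub>R (axis k 1 - axis l 1)) $ i"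
      apply (subst ui[of i]) by (simp add: axis_def diff_divide_distrib)
  qed
  have xu: "x \<bullet> u = (x $ k - x $ l) / (c * u $ k)" for x
    by (subst ueq) (simp add: inner_diff_right inner_axis)
  have "w x = x \<longleftrightarrow> x $ k = x $ l" for x
  proof -
    have "w x = x \<longleftrightarrow> (2 * (x \<bullet> u) / (u \<bullet> u)) *\<^sub>R u = 0" using r[of x] by auto
    also have "\<dots> \<longleftrightarrow> x \<bullet> u = 0" using u uu by simp
    also have "\<dots> \<longleftrightarrow> x $ k = x $ l" using xu[of x] c uk by simp
    finally show ?thesis .
  qed
  thus ?thesis using H lk by (intro exI[of _ k] exI[of _ l]) auto
qed

abbreviation U_set :: "(real^'n) set" where "U_set \<equiv> Sph - \<Union>{H. is_wall H}"

lemma wall_PP: assumes "is_wall H" "0 \<le> t" "y \<in> Sph"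
  shows "PP t c y \<in> H \<longleftrightarrow> y \<in> H"
proof -
  obtain \<sigma> where H: "H = {x\<in>Sph. perm_act \<sigma> x = x}" using wall_perm[OF assms(1)] by blast
  show ?thesis using perm_act_PP[OF assms(2,3)] PP_Sph[OF assms(2,3)] assms(3) H by auto
qed

lemma PP_U: assumes "y \<in> U_set" "0 \<le> t" shows "PP t c y \<in> U_set"
proof -
  have yS: "y \<in> Sph" and nw: "\<And>H. is_wall H \<Longrightarrow> y \<notin> H" using assms(1) by auto
  show ?thesis using PP_Sph[OF assms(2) yS] wall_PP[OF _ assms(2) yS] nw by blast
qed

lemma chamber_PP: assumes "is_chamber C"
  shows "C \<subseteq> Sph \<and> PP 1 c ` C \<subseteq> C"
proof -
  obtain x where x: "x \<in> U_set" and C: "C = closure (connected_component_set U_set x)"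
    using assms unfolding is_chamber_def by blast
  define K where "K = connected_component_set U_set x"
  have KU: "K \<subseteq> U_set" unfolding K_def by (rule connected_component_subset)
  have KS: "K \<subseteq> Sph" using KU by auto
  have img: "PP 1 c ` K \<subseteq> K"
  proof
    fix z assume "z \<in> PP 1 c ` K"
    then obtain y where y: "y \<in> K" and z: "z = PP 1 c y" by auto
    have yS: "y \<in> Sph" using y KS by auto
    define T where "T = (\<lambda>t. PP t c y) ` {0..1}"
    have "connected T" unfolding T_def
      by (rule connected_continuous_image[OF PP_cont_t[OF yS]]) simp
    moreover have "T \<subseteq> U_set" unfolding T_def using y KU by (auto intro!: PP_U)
    moreover have "y \<in> T" unfolding T_def using PP_0[OF yS, of c]
      by (metis atLeastAtMost_iff image_eqI order_refl zero_le_one)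
    ultimately have "T \<subseteq> connected_component_set U_set y" by (meson connected_component_maximal)
    also have "\<dots> = K" unfolding K_def using y K_def connected_component_eq by blast
    finally show "z \<in> K" using z unfolding T_def by auto
  qed
  have cS: "closure K \<subseteq> Sph" using KS closed_Sph by (rule closure_minimal)
  have "PP 1 c ` closure K \<subseteq> closure K"
    by (rule image_closure_subset[OF continuous_on_subset[OF PP_cont_y cS]])
       (use img closure_subset in auto)
  thus ?thesis using cS C K_def by simp
qed

lemma vertex_two: assumes "is_vertex (v::real^'n)"
  shows "v \<in> Sph \<and> (\<forall>a b d. v $ a = v $ b \<or> v $ b = v $ d \<or> v $ a = v $ d)"
proof -
  obtain C Hs where C: "is_chamber C" and Hs: "\<forall>H\<in>Hs. is_wall H" and v: "{v} = C \<inter> \<Inter>Hs"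
    using assms unfolding is_vertex_def is_face_def by blast
  have vC: "v \<in> C" using v by auto
  have vS: "v \<in> Sph" using chamber_PP[OF C] vC by auto
  have cl: "\<not> (v $ a < v $ b \<and> v $ b < v $ d)" for a b d
  proof
    assume ch: "v $ a < v $ b \<and> v $ b < v $ d"
    define F where "F = PP 1 (v $ b) v"
    have "F \<in> C" unfolding F_def using chamber_PP[OF C] vC by auto
    moreover have "F \<in> H" if "H \<in> Hs" for H
      using wall_PP[of H 1 v "v $ b"] Hs that v vS unfolding F_def by auto
    ultimately have "F \<in> {v}" using v by blast
    hence Fv: "F = v" by simp
    define N where "N = norm (cen (\<chi> i. hf 1 (v $ b) (v $ i)))"
    define m where "m = (\<Sum>j\<in>UNIV. hf 1 (v $ b) (v $ j)) / real CARD('n)"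
    have N: "N > 0" unfolding N_def using cen_nz[OF _ vS, of 1 "v $ b"] by simp
    have Fi: "v $ i = (hf 1 (v $ b) (v $ i) - m) / N" for i
      using PP_comp[of 1 "v $ b" v i] Fv unfolding F_def N_def m_def by simp
    have e1: "v $ a - m = N * v $ a" using Fi[of a] ch N by (simp add: hf_def field_simps)
    have e2: "v $ b - m = N * v $ b" using Fi[of b] N by (simp add: hf_def field_simps)
    have e3: "2 * v $ d - v $ b - m = N * v $ d" using Fi[of d] ch N by (simp add: hf_def field_simps)
    have "(N - 1) * (v $ a - v $ b) = 0" using e1 e2 by (simp add: algebra_simps)
    hence N1: "N = 1" using ch by simp
    thus False using e1 e2 e3 ch by simp
  qed
  show ?thesis
  proof (intro conjI vS allI)
    fix a b d
    show "v $ a = v $ b \<or> v $ b = v $ d \<or> v $ a = v $ d"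
      using cl[of a b d] cl[of a d b] cl[of b a d] cl[of b d a] cl[of d a b] cl[of d b a]
      by linarith
  qed
qed

lemma bdry_eq: assumes "\<alpha> = {x\<in>Sph. 0 \<le> x \<bullet> u}"
  shows "{x\<in>Sph. x \<bullet> u = 0} = {x\<in>\<alpha>. - x \<in> \<alpha>}"
proof -
  have "x \<in> Sph \<Longrightarrow> - x \<in> Sph" for x by (rule neg_Sph)
  moreover have "- x \<in> Sph \<Longrightarrow> x \<in> Sph" for x using neg_Sph[of "- x"] by simp
  ultimately show ?thesis using assms by (auto simp: inner_minus_left)
qed

lemma root_struct: assumes "is_root (\<alpha>::(real^'n) set)"
  shows "\<exists>u k l. k \<noteq> l \<and> u \<noteq> 0 \<and> \<alpha> = {x\<in>Sph. 0 \<le> x \<bullet> u} \<and>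
     root_bdry \<alpha> = {x\<in>Sph. x \<bullet> u = 0} \<and> {x\<in>Sph. x \<bullet> u = 0} = {x\<in>Sph. x $ k = x $ l}"
proof -
  obtain u where u: "u \<noteq> 0" and w: "is_wall {x\<in>Sph. x \<bullet> u = 0}" and a: "\<alpha> = {x\<in>Sph. 0 \<le> x \<bullet> u}"
    using assms unfolding is_root_def by blast
  obtain k l where kl: "k \<noteq> l" "{x\<in>Sph. x \<bullet> u = 0} = {x\<in>Sph. x $ k = x $ l}"
    using wall_kl[OF w] by blast
  have "root_bdry \<alpha> = {x\<in>Sph. x \<bullet> u = 0}"
    unfolding root_bdry_def
  proof (rule the_equality)
    show "is_wall {x\<in>Sph. x \<bullet> u = 0} \<and> (\<exists>u'. u' \<noteq> 0 \<and> {x\<in>Sph. x \<bullet> u = 0} = {x\<in>Sph. x \<bullet> u' = 0} \<and>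
        \<alpha> = {x\<in>Sph. 0 \<le> x \<bullet> u'})" using w u a by blast
  next
    fix H assume "is_wall H \<and> (\<exists>u'. u' \<noteq> 0 \<and> H = {x\<in>Sph. x \<bullet> u' = 0} \<and> \<alpha> = {x\<in>Sph. 0 \<le> x \<bullet> u'})"
    then obtain u' where h: "H = {x\<in>Sph. x \<bullet> u' = 0}" and a': "\<alpha> = {x\<in>Sph. 0 \<le> x \<bullet> u'}" by blast
    have "H = {x\<in>\<alpha>. - x \<in> \<alpha>}" using h bdry_eq[OF a'] by simp
    also have "\<dots> = {x\<in>Sph. x \<bullet> u = 0}" using bdry_eq[OF a] by simp
    finally show "H = {x\<in>Sph. x \<bullet> u = 0}" .
  qed
  thus ?thesis using kl u a by blast
qed

lemma sum_axis: "(\<Sum>i\<in>UNIV. axis k (1::real) $ i) = 1"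
  by (simp add: axis_def)

lemma unit_in_wall: assumes "z \<noteq> 0" "(\<Sum>i\<in>UNIV. z $ i) = 0" "z $ k = z $ l"
  shows "(1 / norm z) *\<^sub>R z \<in> {x\<in>Sph. x $ k = x $ l}"
proof -
  have "(\<Sum>i\<in>UNIV. ((1 / norm z) *\<^sub>R z) $ i) = (1 / norm z) * (\<Sum>i\<in>UNIV. z $ i)"
    by (simp add: sum_distrib_left)
  thus ?thesis using assms by (simp add: Sph_def)
qed

lemma dist_wall: assumes "CARD('n) \<ge> 3" "k \<noteq> l" "(v::real^'n) \<in> Sph"
  shows "sin (sdist_set v {x\<in>Sph. x $ k = x $ l}) = \<bar>v $ k - v $ l\<bar> / sqrt 2"
proof -
  define H where "H = {x\<in>Sph. x $ k = x $ l}"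
  define d :: "real^'n" where "d = axis k 1 - axis l 1"
  define \<delta> where "\<delta> = v $ k - v $ l"
  define p where "p = v - (\<delta>/2) *\<^sub>R d"
  have vd: "v \<bullet> d = \<delta>" unfolding d_def \<delta>_def by (simp add: inner_diff_right inner_axis)
  have dd: "d \<bullet> d = 2" unfolding d_def using assms(2)
    by (simp add: inner_diff_right inner_diff_left inner_axis_axis)
  have xd: "x \<bullet> d = x $ k - x $ l" for x unfolding d_def by (simp add: inner_diff_right inner_axis)
  have vv: "v \<bullet> v = 1" using assms(3) by (simp add: Sph_def dot_square_norm)
  have pp: "p \<bullet> p = 1 - \<delta>^2/2" unfolding p_def
    using vd inner_commute[of d v]
    by (simp add: inner_diff_right inner_diff_left vd dd vv power2_eq_square algebra_simps)
  have np: "norm p ^ 2 = 1 - \<delta>^2/2" using pp by (simp add: power2_norm_eq_inner)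
  have np1: "norm p \<le> 1"
  proof -
    have "norm p ^ 2 \<le> 1 ^ 2" using np by simp
    thus ?thesis by (rule power2_le_imp_le) simp
  qed
  have vx: "v \<bullet> x = p \<bullet> x" if "x \<in> H" for x
  proof -
    have "x $ k = x $ l" using that H_def by simp
    hence "d \<bullet> x = 0" using xd[of x] by (simp add: inner_commute)
    thus ?thesis unfolding p_def by (simp add: inner_diff_left)
  qed
  have sump: "(\<Sum>i\<in>UNIV. p $ i) = 0"
  proof -
    have pi: "p $ i = v $ i - (\<delta>/2) * axis k 1 $ i + (\<delta>/2) * axis l 1 $ i" for i
      unfolding p_def d_def by (simp add: algebra_simps)
    have "(\<Sum>i\<in>UNIV. p $ i) = (\<Sum>i\<in>UNIV. v $ i) - (\<delta>/2) * (\<Sum>i\<in>UNIV. axis k (1::real) $ i) + (\<delta>/2) * (\<Sum>i\<in>UNIV. axis l (1::real) $ i)"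
      by (simp only: pi sum.distrib sum_subtractf sum_distrib_left)
    thus ?thesis using assms(3) by (simp only: sum_axis) (simp add: Sph_def)
  qed
  have dk: "d $ k = 1" "d $ l = -1" unfolding d_def using assms(2) by (simp_all add: axis_def)
  have pkl: "p $ k = p $ l" unfolding p_def \<delta>_def using dk by (simp add: field_simps)
  obtain x0 where x0: "x0 \<in> H" "v \<bullet> x0 = norm p"
  proof (cases "p = 0")
    case False
    have "(1 / norm p) *\<^sub>R p \<in> H" unfolding H_def by (rule unit_in_wall[OF False sump pkl])
    moreover have "v \<bullet> ((1 / norm p) *\<^sub>R p) = norm p"
      using vx[OF calculation] False by (simp add: dot_square_norm power2_eq_square)
    ultimately show ?thesis using that by blast
  next
    case True
    have "\<exists>m. m \<notin> {k, l}"
    proof (rule ccontr)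
      assume "\<not> ?thesis"
      hence "(UNIV::'n set) \<subseteq> {k, l}" by auto
      hence "CARD('n) \<le> card {k, l}" by (intro card_mono) auto
      also have "\<dots> \<le> 2" by (simp add: card_insert_if)
      finally show False using assms(1) by simp
    qed
    then obtain m where m: "m \<noteq> k" "m \<noteq> l" by auto
    define q :: "real^'n" where "q = axis k 1 + axis l 1 - 2 *\<^sub>R axis m 1"
    have "q $ m = -2" unfolding q_def using m by (simp add: axis_def)
    hence qn: "q \<noteq> 0" by auto
    have sq: "(\<Sum>i\<in>UNIV. q $ i) = 0"
    proof -
      have "(\<Sum>i\<in>UNIV. q $ i) = (\<Sum>i\<in>UNIV. axis k (1::real) $ i) + (\<Sum>i\<in>UNIV. axis l (1::real) $ i)
          - 2 * (\<Sum>i\<in>UNIV. axis m (1::real) $ i)"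
        unfolding q_def by (simp add: sum.distrib sum_subtractf sum_distrib_left)
      thus ?thesis by (simp add: sum_axis)
    qed
    have "q $ k = q $ l" unfolding q_def using m assms(2) by (simp add: axis_def)
    hence "(1 / norm q) *\<^sub>R q \<in> H" unfolding H_def by (rule unit_in_wall[OF qn sq])
    moreover have "v \<bullet> ((1 / norm q) *\<^sub>R q) = norm p" using vx[OF calculation] True by simp
    ultimately show ?thesis using that by blast
  qed
  have "sdist_set v H = arccos (norm p)"
    unfolding sdist_set_def
  proof (rule cInf_eq_minimum)
    show "arccos (norm p) \<in> sdist v ` H" using x0 unfolding sdist_def by force
  next
    fix y assume "y \<in> sdist v ` H"
    then obtain x where x: "x \<in> H" "y = arccos (v \<bullet> x)" unfolding sdist_def by auto
    have nx: "norm x = 1" using x(1) unfolding H_def Sph_def by simp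
    have nv: "norm v = 1" using assms(3) unfolding Sph_def by simp
    have "\<bar>v \<bullet> x\<bar> \<le> 1" using Cauchy_Schwarz_ineq2[of v x] nx nv by simp
    moreover have "p \<bullet> x \<le> norm p" using norm_cauchy_schwarz[of p x] nx by simp
    ultimately show "arccos (norm p) \<le> y" unfolding x(2) using vx[OF x(1)] np1
      by (intro arccos_le_arccos) auto
  qed
  moreover have "sin (arccos (norm p)) = \<bar>\<delta>\<bar> / sqrt 2"
  proof -
    have "sin (arccos (norm p)) = sqrt (1 - (norm p)^2)" using np1 norm_ge_zero[of p] by (intro sin_arccos) linarith+
    also have "\<dots> = sqrt (\<delta>^2 / 2)" using np by simp
    also have "\<dots> = \<bar>\<delta>\<bar> / sqrt 2" by (simp add: real_sqrt_divide)
    finally show ?thesis .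
  qed
  ultimately show ?thesis unfolding H_def \<delta>_def by simp
qed

lemma lam_root: assumes "CARD('n) \<ge> 3" "is_root (\<alpha>::(real^'n) set)" "v \<in> \<alpha> - root_bdry \<alpha>"
  shows "\<exists>k l. k \<noteq> l \<and> v $ k \<noteq> v $ l \<and> v \<in> Sph \<and>
     sin (sdist_set v (root_bdry \<alpha>)) = \<bar>v $ k - v $ l\<bar> / sqrt 2"
proof -
  obtain u k l where kl: "k \<noteq> l" and a: "\<alpha> = {x\<in>Sph. 0 \<le> x \<bullet> u}"
    and b: "root_bdry \<alpha> = {x\<in>Sph. x \<bullet> u = 0}" and w: "{x\<in>Sph. x \<bullet> u = 0} = {x\<in>Sph. x $ k = x $ l}"
    using root_struct[OF assms(2)] by blast
  have vS: "v \<in> Sph" using assms(3) a by auto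
  have "v $ k \<noteq> v $ l" using assms(3) b w vS by auto
  thus ?thesis using kl vS dist_wall[OF assms(1) kl vS] b w by auto
qed

lemma part2: assumes "CARD('n) \<ge> 3" "is_root (\<alpha>::(real^'n) set)" "is_root \<alpha>'" "is_vertex v"
  "v \<in> \<alpha> - root_bdry \<alpha>" "v' \<in> \<alpha>' - root_bdry \<alpha>'" "vtype v = vtype v'"
  shows "sin (sdist_set v (root_bdry \<alpha>)) = sin (sdist_set v' (root_bdry \<alpha>'))"
proof -
  obtain k l where kl: "v $ k \<noteq> v $ l" and e1: "sin (sdist_set v (root_bdry \<alpha>)) = \<bar>v $ k - v $ l\<bar> / sqrt 2"
    using lam_root[OF assms(1,2,5)] by blast
  obtain k' l' where kl': "v' $ k' \<noteq> v' $ l'" and e2: "sin (sdist_set v' (root_bdry \<alpha>')) = \<bar>v' $ k' - v' $ l'\<bar> / sqrt 2"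
    using lam_root[OF assms(1,3,6)] by blast
  have "perm_act id \<in> (Weyl :: (real^'n \<Rightarrow> real^'n) set)" unfolding Weyl_def by auto
  moreover have "perm_act id v' = v'" by (simp add: perm_act_def)
  ultimately have "v' \<in> vtype v'" unfolding vtype_def by (metis (no_types, lifting) image_eqI)
  hence "v' \<in> vtype v" using assms(7) by simp
  then obtain \<sigma> where v': "v' = perm_act \<sigma> v" unfolding vtype_def Weyl_def by auto
  define a where "a = \<sigma> k'"
  define b where "b = \<sigma> l'"
  have va: "v' $ k' = v $ a" "v' $ l' = v $ b" unfolding v' a_def b_def by (simp_all add: perm_act_def)
  have two: "\<forall>a b d. v $ a = v $ b \<or> v $ b = v $ d \<or> v $ a = v $ d" using vertex_two[OF assms(4)] by blast
  have "v $ a = v $ k \<or> v $ a = v $ l" "v $ b = v $ k \<or> v $ b = v $ l" using two kl by metis+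
  hence "\<bar>v $ k - v $ l\<bar> = \<bar>v $ a - v $ b\<bar>" using kl' va by auto
  thus ?thesis using e1 e2 va by simp
qed

lemma interior_not_bdry: assumes "is_root (\<alpha>::(real^'n) set)" "K \<subseteq> \<alpha>" "v \<in> s_interior K"
  shows "v \<notin> root_bdry \<alpha>"
proof
  assume vb: "v \<in> root_bdry \<alpha>"
  obtain u k l where kl: "k \<noteq> l" and a: "\<alpha> = {x\<in>Sph. 0 \<le> x \<bullet> u}"
    and b: "root_bdry \<alpha> = {x\<in>Sph. x \<bullet> u = 0}" and w: "{x\<in>Sph. x \<bullet> u = 0} = {x\<in>Sph. x $ k = x $ l}"
    using root_struct[OF assms(1)] by blast
  have vS: "v \<in> Sph" and vu: "v \<bullet> u = 0" using vb b by auto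
  have vkl: "v $ k = v $ l" using vS vu w by blast
  obtain e where e: "e > 0" "Sph \<inter> ball v e \<subseteq> K" using assms(3) unfolding s_interior_def by blast
  define d :: "real^'n" where "d = axis l 1 - axis k 1"
  have xd: "x \<bullet> d = x $ l - x $ k" for x unfolding d_def by (simp add: inner_diff_right inner_axis)
  have dd: "d \<bullet> d = 2" unfolding d_def using kl
    by (simp add: inner_diff_right inner_diff_left inner_axis_axis)
  have dkl: "d $ k = -1" "d $ l = 1" unfolding d_def using kl by (simp_all add: axis_def)
  have sd: "(\<Sum>i\<in>UNIV. d $ i) = 0"
  proof -
    have "(\<Sum>i\<in>UNIV. d $ i) = (\<Sum>i\<in>UNIV. axis l (1::real) $ i) - (\<Sum>i\<in>UNIV. axis k (1::real) $ i)"
      unfolding d_def by (simp add: sum_subtractf)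
    thus ?thesis by (simp add: sum_axis)
  qed
  have du: "d \<bullet> u \<noteq> 0"
  proof
    assume du0: "d \<bullet> u = 0"
    have dn: "d \<noteq> 0" using dkl by auto
    have z: "(1 / norm d) *\<^sub>R d \<in> Sph"
    proof -
      have "(\<Sum>i\<in>UNIV. ((1 / norm d) *\<^sub>R d) $ i) = (1 / norm d) * (\<Sum>i\<in>UNIV. d $ i)"
        by (simp add: sum_distrib_left)
      thus ?thesis using dn sd by (simp add: Sph_def)
    qed
    moreover have "((1 / norm d) *\<^sub>R d) \<bullet> u = 0" using du0 by simp
    ultimately have "((1 / norm d) *\<^sub>R d) $ k = ((1 / norm d) *\<^sub>R d) $ l" using w by blast
    thus False using dkl dn by simp
  qed
  define s0 where "s0 = min 1 (e / 8)"
  have s0: "s0 > 0" "s0 \<le> 1" "s0 \<le> e / 8" using e(1) by (auto simp: s0_def)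
  define s where "s = (if d \<bullet> u > 0 then - s0 else s0)"
  have sdu: "s * (d \<bullet> u) < 0" using du s0 by (auto simp: s_def mult_less_0_iff)
  have as: "\<bar>s\<bar> = s0" using s0 by (simp add: s_def)
  define z where "z = v + s *\<^sub>R d"
  define N where "N = norm z"
  have vd: "v \<bullet> d = 0" using xd[of v] vkl by simp
  have vv: "v \<bullet> v = 1" using vS by (simp add: Sph_def dot_square_norm)
  have N2: "N ^ 2 = 1 + 2 * s ^ 2"
  proof -
    have "N ^ 2 = z \<bullet> z" unfolding N_def by (simp add: power2_norm_eq_inner)
    also have "\<dots> = 1 + 2 * s ^ 2" unfolding z_def using vd vv dd inner_commute[of d v]
      by (simp add: inner_add_left inner_add_right power2_eq_square)
    finally show ?thesis .
  qed
  have N1: "N \<ge> 1"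
  proof -
    have "1 ^ 2 \<le> N ^ 2" using N2 by simp
    thus ?thesis by (rule power2_le_imp_le) (simp add: N_def)
  qed
  define y where "y = (1 / N) *\<^sub>R z"
  have yS: "y \<in> Sph"
  proof -
    have "(\<Sum>i\<in>UNIV. y $ i) = (1 / N) * ((\<Sum>i\<in>UNIV. v $ i) + s * (\<Sum>i\<in>UNIV. d $ i))"
      unfolding y_def z_def by (simp add: sum_distrib_left sum.distrib sum_divide_distrib[symmetric])
    moreover have "norm y = 1"
    proof -
      have "N \<noteq> 0" using N1 by simp
      thus ?thesis unfolding y_def by (simp add: N_def)
    qed
    ultimately show ?thesis using vS sd by (simp add: Sph_def)
  qed
  have yu: "y \<bullet> u < 0"
  proof -
    have "y \<bullet> u = (1 / N) * (s * (d \<bullet> u))" unfolding y_def z_def using vu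
      by (simp add: inner_add_left)
    moreover have "N > 0" using N1 by simp
    ultimately show ?thesis using sdu by (simp add: divide_neg_pos)
  qed
  have "norm (y - v) < e"
  proof -
    have "y - v = (1 / N - 1) *\<^sub>R v + (s / N) *\<^sub>R d" unfolding y_def z_def
      unfolding scaleR_add_right scaleR_scaleR scaleR_diff_left by simp
    hence tri: "norm (y - v) \<le> \<bar>1 / N - 1\<bar> * norm v + \<bar>s / N\<bar> * norm d"
      using norm_triangle_ineq[of "(1 / N - 1) *\<^sub>R v" "(s / N) *\<^sub>R d"] by simp
    have nv: "norm v = 1" using vS by (simp add: Sph_def)
    have nd: "norm d \<le> 2"
    proof -
      have "norm d ^ 2 = 2" using dd by (simp add: power2_norm_eq_inner)
      hence "norm d ^ 2 \<le> 2 ^ 2" by simp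
      thus ?thesis by (rule power2_le_imp_le) simp
    qed
    have Np: "N > 0" using N1 by simp
    have A: "\<bar>1 / N - 1\<bar> \<le> 2 * s0"
    proof -
      have "1 / N \<le> 1" using N1 by simp
      hence "\<bar>1 / N - 1\<bar> = 1 - 1 / N" by simp
      also have "\<dots> = (N - 1) / N" using Np by (simp add: diff_divide_distrib)
      also have "\<dots> \<le> N - 1"
      proof -
        have "(N - 1) * 1 \<le> (N - 1) * N" using N1 by (intro mult_left_mono) auto
        thus ?thesis using Np by (simp add: pos_divide_le_eq)
      qed
      also have "\<dots> \<le> N ^ 2 - 1"
      proof -
        have "N * 1 \<le> N * N" using N1 by (intro mult_left_mono) auto
        thus ?thesis by (simp add: power2_eq_square)
      qed
      also have "\<dots> = 2 * s0 ^ 2"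
      proof -
        have "s ^ 2 = s0 ^ 2" using as power2_abs[of s] by simp
        thus ?thesis using N2 by simp
      qed
      also have "\<dots> \<le> 2 * s0"
      proof -
        have "s0 * s0 \<le> s0 * 1" using s0 by (intro mult_left_mono) auto
        thus ?thesis by (simp add: power2_eq_square)
      qed
      finally show ?thesis .
    qed
    have B: "\<bar>s / N\<bar> \<le> s0"
    proof -
      have "\<bar>s / N\<bar> = s0 / N" using as Np by (simp add: abs_divide)
      also have "\<dots> \<le> s0" using s0 N1 by (simp add: divide_le_eq mult_le_cancel_left1)
      finally show ?thesis .
    qed
    have "\<bar>s / N\<bar> * norm d \<le> s0 * 2" using B nd s0 by (intro mult_mono) auto
    moreover have "norm (y - v) \<le> \<bar>1 / N - 1\<bar> + \<bar>s / N\<bar> * norm d" using tri nv by simp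
    ultimately have "norm (y - v) \<le> 2 * s0 + s0 * 2" using A by linarith
    also have "\<dots> < e" using s0 e(1) by linarith
    finally show ?thesis .
  qed
  hence "y \<in> ball v e" by (simp add: dist_norm norm_minus_commute)
  hence "y \<in> \<alpha>" using e(2) yS assms(2) by blast
  thus False using yu a by auto
qed

theorem lemma2p13:
  assumes "CARD('n::finite) \<ge> 3"
  shows "(\<forall>(\<alpha>::(real^'n) set) v. is_root \<alpha> \<and> is_vertex v \<and> v \<in> \<alpha> - root_bdry \<alpha> \<longrightarrow>
            sin (sdist_set v (root_bdry \<alpha>)) > 0)
       \<and> (\<forall>(\<alpha>::(real^'n) set) \<alpha>' v v'.
            is_root \<alpha> \<and> is_root \<alpha>' \<and> is_vertex v \<and> is_vertex v' \<and>
            v \<in> \<alpha> - root_bdry \<alpha> \<and> v' \<in> \<alpha>' - root_bdry \<alpha>' \<and> vtype v = vtype v' \<longrightarrow>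
            sin (sdist_set v (root_bdry \<alpha>)) = sin (sdist_set v' (root_bdry \<alpha>')))
       \<and> (\<forall>(K::(real^'n) set) v. convex_subcomplex K \<and> top_dimensional K \<and> K \<noteq> Sph \<and>
            is_vertex v \<and> v \<in> s_interior K \<longrightarrow>
            (\<exists>\<alpha>. is_root \<alpha> \<and> v \<in> \<alpha> - root_bdry \<alpha>) \<and>
            (\<forall>\<alpha>. is_root \<alpha> \<and> v \<in> \<alpha> - root_bdry \<alpha> \<longrightarrow>
                 fK K v = - sin (sdist_set v (root_bdry \<alpha>))))"
proof (intro conjI allI impI)
  fix \<alpha> :: "(real^'n) set" and v
  assume h: "is_root \<alpha> \<and> is_vertex v \<and> v \<in> \<alpha> - root_bdry \<alpha>"
  obtain k l where "v $ k \<noteq> v $ l" "sin (sdist_set v (root_bdry \<alpha>)) = \<bar>v $ k - v $ l\<bar> / sqrt 2"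
    using lam_root[OF assms, of \<alpha> v] h by blast
  thus "sin (sdist_set v (root_bdry \<alpha>)) > 0" by simp
next
  fix \<alpha> \<alpha>' :: "(real^'n) set" and v v'
  assume h: "is_root \<alpha> \<and> is_root \<alpha>' \<and> is_vertex v \<and> is_vertex v' \<and>
            v \<in> \<alpha> - root_bdry \<alpha> \<and> v' \<in> \<alpha>' - root_bdry \<alpha>' \<and> vtype v = vtype v'"
  thus "sin (sdist_set v (root_bdry \<alpha>)) = sin (sdist_set v' (root_bdry \<alpha>'))"
    using part2[OF assms] by blast
next
  fix K :: "(real^'n) set" and v
  assume h: "convex_subcomplex K \<and> top_dimensional K \<and> K \<noteq> Sph \<and> is_vertex v \<and> v \<in> s_interior K"
  obtain A where A: "\<forall>\<alpha>\<in>A. is_root \<alpha>" "K = Sph \<inter> \<Inter>A"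
    using h unfolding convex_subcomplex_def by blast
  have "A \<noteq> {}" using A h by auto
  then obtain \<alpha>0 where a0: "\<alpha>0 \<in> A" by auto
  have r0: "is_root \<alpha>0" using A a0 by blast
  have K0: "K \<subseteq> \<alpha>0" using A a0 by blast
  have vK: "v \<in> K" using h unfolding s_interior_def by blast
  have inner: "v \<in> \<beta> - root_bdry \<beta>" if "is_root \<beta>" "K \<subseteq> \<beta>" for \<beta>
    using interior_not_bdry[OF that] h vK that(2) by blast
  show ex: "\<exists>\<alpha>. is_root \<alpha> \<and> v \<in> \<alpha> - root_bdry \<alpha>" using inner[OF r0 K0] r0 by blast
  fix \<alpha> assume ha: "is_root \<alpha> \<and> v \<in> \<alpha> - root_bdry \<alpha>"
  have "(\<lambda>\<alpha>. - sin (sdist_set v (root_bdry \<alpha>))) ` Lambda K = {- sin (sdist_set v (root_bdry \<alpha>))}"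
  proof
    show "(\<lambda>\<alpha>. - sin (sdist_set v (root_bdry \<alpha>))) ` Lambda K \<subseteq> {- sin (sdist_set v (root_bdry \<alpha>))}"
    proof
      fix x assume "x \<in> (\<lambda>\<alpha>. - sin (sdist_set v (root_bdry \<alpha>))) ` Lambda K"
      then obtain \<beta> where b: "is_root \<beta>" "K \<subseteq> \<beta>" "x = - sin (sdist_set v (root_bdry \<beta>))"
        unfolding Lambda_def by auto
      have "sin (sdist_set v (root_bdry \<beta>)) = sin (sdist_set v (root_bdry \<alpha>))"
        using part2[OF assms b(1) _ _ inner[OF b(1,2)], of \<alpha> v] ha h by blast
      thus "x \<in> {- sin (sdist_set v (root_bdry \<alpha>))}" using b by simp
    qed
  next
    have "- sin (sdist_set v (root_bdry \<alpha>0)) = - sin (sdist_set v (root_bdry \<alpha>))"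
      using part2[OF assms r0 _ _ inner[OF r0 K0], of \<alpha> v] ha h by simp
    moreover have "\<alpha>0 \<in> Lambda K" unfolding Lambda_def using r0 K0 by blast
    ultimately show "{- sin (sdist_set v (root_bdry \<alpha>))} \<subseteq> (\<lambda>\<alpha>. - sin (sdist_set v (root_bdry \<alpha>))) ` Lambda K"
      by (metis (no_types, lifting) empty_subsetI image_eqI insert_subset)
  qed
  thus "fK K v = - sin (sdist_set v (root_bdry \<alpha>))" unfolding fK_def by simp
qed

end
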